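(* Let $0\le t_d\le t_f$ be integers and let $f:\mathbb{F}_q^k\to\mathrm{Im}(f)$ be a locally $(2t_f,\lambda)$-bounded function such that there is a total order $\prec$ on $\mathrm{Im}(f)$ for which every set $B_f(u,2t_f)$, $u\in\mathbb{F}_q^k$, is a contiguous block (an interval) with respect to $\prec$. Suppose there exists a systematic $[n,k,2t_d+1]$ linear code over $\mathbb{F}_q$. Then $$r_f(k,t_d,t_f)\le n-k+N(\lambda,2(t_f-t_d)).$$ In particular, for $q=2$ and $\lambda=4$, $r_f(k,t_d,t_f)\le n-k+3(t_f-t_d)$.
   Context: $d(\cdot,\cdot)$ is Hamming distance. $B_f(u,\rho)=\{f(u'):u'\in\mathbb{F}_q^k,\ d(u,u')\le\rho\}$; $f$ is locally $(\rho,\lambda)$-bounded if $|B_f(u,\rho)|\le\lambda$ for all $u$. $N(\lambda,d)$ is the minimum length of a $q$-ary code with $\lambda$ codewords and minimum distance at least $d$ (with $N(\lambda,0)=0$). An $(f,t_d,t_f)$-FCC with redundancy $r$ is a systematic encoding $u\mapsto(u,p_u)\in\mathbb{F}_q^{k+r}$ whose images are at distance $\ge 2t_d+1$ for distinct messages and $\ge 2t_f+1$ for messages with different $f$-values; $r_f(k,t_d,t_f)$ is the minimum such $r$. *)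

theory Defs
  imports Main
begin

definition words :: "nat \<Rightarrow> 'a list set" where
  "words m = {u. length u = m}"

definition hdist :: "'a list \<Rightarrow> 'a list \<Rightarrow> nat" where
  "hdist x y = card {i. i < length x \<and> i < length y \<and> x ! i \<noteq> y ! i}"

definition fball :: "nat \<Rightarrow> ('a list \<Rightarrow> 'b) \<Rightarrow> 'a list \<Rightarrow> nat \<Rightarrow> 'b set" where
  "fball k f u \<rho> = {f u' | u'. u' \<in> words k \<and> hdist u u' \<le> \<rho>}"

definition locally_bounded :: "nat \<Rightarrow> ('a list \<Rightarrow> 'b) \<Rightarrow> nat \<Rightarrow> nat \<Rightarrow> bool" where
  "locally_bounded k f \<rho> lam \<longleftrightarrow> (\<forall>u \<in> words k. card (fball k f u \<rho>) \<le> lam)"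

definition N_code :: "'a itself \<Rightarrow> nat \<Rightarrow> nat \<Rightarrow> nat" where
  "N_code _ lam d = (if d = 0 then 0 else
     (LEAST n. \<exists>C :: 'a list set. C \<subseteq> words n \<and> card C = lam \<and>
        (\<forall>x\<in>C. \<forall>y\<in>C. x \<noteq> y \<longrightarrow> d \<le> hdist x y)))"

text \<open>An (f,t_d,t_f)-FCC with redundancy r: systematic encoding u \<mapsto> (u, p u).\<close>
definition is_FCC :: "nat \<Rightarrow> ('a list \<Rightarrow> 'b) \<Rightarrow> nat \<Rightarrow> nat \<Rightarrow> nat \<Rightarrow> ('a list \<Rightarrow> 'a list) \<Rightarrow> bool" where
  "is_FCC k f td tf r p \<longleftrightarrow>
     (\<forall>u \<in> words k. length (p u) = r) \<and>
     (\<forall>u \<in> words k. \<forall>v \<in> words k. u \<noteq> v \<longrightarrow> 2 * td + 1 \<le> hdist (u @ p u) (v @ p v)) \<and>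
     (\<forall>u \<in> words k. \<forall>v \<in> words k. f u \<noteq> f v \<longrightarrow> 2 * tf + 1 \<le> hdist (u @ p u) (v @ p v))"

definition r_f :: "nat \<Rightarrow> ('a list \<Rightarrow> 'b) \<Rightarrow> nat \<Rightarrow> nat \<Rightarrow> nat" where
  "r_f k f td tf = (LEAST r. \<exists>p. is_FCC k f td tf r p)"

text \<open>Systematic [n,k,d] linear code over the field 'a (minimum distance at least d):
  generator matrix [I_k | P] with P a k x (n-k) matrix.\<close>
definition sys_lin_enc :: "nat \<Rightarrow> nat \<Rightarrow> (nat \<Rightarrow> nat \<Rightarrow> 'a::field) \<Rightarrow> 'a list \<Rightarrow> 'a list" where
  "sys_lin_enc n k P u = u @ map (\<lambda>j. \<Sum>i<k. u ! i * P i j) [0..<n - k]"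

definition exists_systematic_linear_code :: "'a::field itself \<Rightarrow> nat \<Rightarrow> nat \<Rightarrow> nat \<Rightarrow> bool" where
  "exists_systematic_linear_code _ n k d \<longleftrightarrow> k \<le> n \<and>
     (\<exists>P :: nat \<Rightarrow> nat \<Rightarrow> 'a. \<forall>u \<in> words k. \<forall>v \<in> words k. u \<noteq> v \<longrightarrow>
        d \<le> hdist (sys_lin_enc n k P u) (sys_lin_enc n k P v))"

definition balls_are_intervals :: "nat \<Rightarrow> ('a list \<Rightarrow> 'b) \<Rightarrow> nat \<Rightarrow> bool" where
  "balls_are_intervals k f \<rho> \<longleftrightarrow>
     (\<exists>R. linear_order_on (f ` words k) R \<and>
        (\<forall>u \<in> words k. \<forall>a \<in> fball k f u \<rho>. \<forall>c \<in> fball k f u \<rho>. \<forall>b \<in> f ` words k.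
           (a, b) \<in> R \<and> (b, c) \<in> R \<longrightarrow> b \<in> fball k f u \<rho>))"

end

theory Submission
  imports Defs
begin

lemma hdist_Nil1[simp]: "hdist [] ys = 0" by (simp add: hdist_def)
lemma hdist_Nil2[simp]: "hdist xs [] = 0" by (simp add: hdist_def)

lemma hdist_Cons[simp]:
  "hdist (a#xs) (b#ys) = (if a = b then 0 else 1) + hdist xs ys"
proof -
  let ?S = "{i. i < length xs \<and> i < length ys \<and> xs ! i \<noteq> ys ! i}"
  have eq: "{i. i < length (a#xs) \<and> i < length (b#ys) \<and> (a#xs) ! i \<noteq> (b#ys) ! i}
      = (if a = b then {} else {0}) \<union> Suc ` ?S"
  proof (rule set_eqI)
    fix i show "i \<in> {i. i < length (a#xs) \<and> i < length (b#ys) \<and> (a#xs) ! i \<noteq> (b#ys) ! i} \<longleftrightarrow>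
      i \<in> (if a = b then {} else {0}) \<union> Suc ` ?S"
      by (cases i) auto
  qed
  have fin: "finite ?S" by simp
  show ?thesis unfolding hdist_def eq
    using fin by (auto simp: card_image)
qed

lemma hdist_self[simp]: "hdist x x = 0" by (simp add: hdist_def)

lemma hdist_append:
  "length xs = length xs' \<Longrightarrow> hdist (xs @ ys) (xs' @ ys') = hdist xs xs' + hdist ys ys'"
proof (induction xs arbitrary: xs')
  case (Cons a xs)
  then obtain b zs where "xs' = b # zs" by (cases xs') auto
  with Cons show ?case by simp
qed simp

lemma hdist_rep:
  "length w = length w' \<Longrightarrow> hdist (concat (replicate m w)) (concat (replicate m w')) = m * hdist w w'"
  by (induction m) (auto simp: hdist_append)

lemma words_finite: "finite (words k :: ('a::finite) list set)"
  using finite_lists_length_eq[of "UNIV :: 'a set" k] by (simp add: words_def)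

lemma hdist_ne: "0 < hdist x y \<Longrightarrow> x \<noteq> y" by auto

lemma code_exists:
  assumes "0 < d"
  shows "\<exists>n (C :: 'a::field list set). C \<subseteq> words n \<and> card C = lam \<and>
           (\<forall>x\<in>C. \<forall>y\<in>C. x \<noteq> y \<longrightarrow> d \<le> hdist x y)"
proof -
  define e :: "nat \<Rightarrow> 'a list" where "e i = map (\<lambda>j. if j = i then 1 else 0) [0..<lam]" for i
  define c where "c i = concat (replicate d (e i))" for i
  have le: "length (e i) = lam" for i by (simp add: e_def)
  have he: "hdist (e i) (e j) = 2" if "i < lam" "j < lam" "i \<noteq> j" for i j
  proof -
    have "{p. p < length (e i) \<and> p < length (e j) \<and> e i ! p \<noteq> e j ! p} = {i, j}"
      using that by (auto simp: e_def split: if_splits)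
    then show ?thesis using that by (simp add: hdist_def)
  qed
  have hc: "hdist (c i) (c j) = d * 2" if "i < lam" "j < lam" "i \<noteq> j" for i j
    unfolding c_def using hdist_rep[of "e i" "e j" d] he[OF that] le by simp
  have inj: "inj_on c {..<lam}"
  proof (rule inj_onI)
    fix i j assume ij: "i \<in> {..<lam}" "j \<in> {..<lam}" "c i = c j"
    show "i = j"
    proof (rule ccontr)
      assume "i \<noteq> j"
      then have "hdist (c i) (c j) = d * 2" using hc[of i j] ij(1,2) by simp
      then show False using ij(3) assms by simp
    qed
  qed
  have lc: "length (c i) = d * lam" for i by (simp add: c_def length_concat le sum_list_replicate)
  show ?thesis
  proof (intro exI conjI)
    show "c ` {..<lam} \<subseteq> words (d * lam)" using lc by (auto simp: words_def)
    show "card (c ` {..<lam}) = lam" using inj by (simp add: card_image)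
    show "\<forall>x\<in>c ` {..<lam}. \<forall>y\<in>c ` {..<lam}. x \<noteq> y \<longrightarrow> d \<le> hdist x y"
    proof (intro ballI impI)
      fix x y assume "x \<in> c ` {..<lam}" "y \<in> c ` {..<lam}" "x \<noteq> y"
      then obtain i j where "i < lam" "j < lam" "x = c i" "y = c j" "i \<noteq> j" by blast
      then show "d \<le> hdist x y" using hc[of i j] by simp
    qed
  qed
qed

lemma cw_exists:
  "\<exists>cw. (\<forall>i<lam. length (cw i) = N_code TYPE('a::{finite,field}) lam d) \<and>
        (\<forall>i<lam. \<forall>j<lam. i \<noteq> j \<longrightarrow> d \<le> hdist (cw i :: 'a list) (cw j))"
proof (cases "d = 0")
  case True
  then show ?thesis by (intro exI[of _ "\<lambda>_. []"]) (simp add: N_code_def)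
next
  case False
  let ?P = "\<lambda>n. \<exists>C :: 'a list set. C \<subseteq> words n \<and> card C = lam \<and>
        (\<forall>x\<in>C. \<forall>y\<in>C. x \<noteq> y \<longrightarrow> d \<le> hdist x y)"
  have ex: "\<exists>n. ?P n" using code_exists[of d lam] False by blast
  have "?P (LEAST n. ?P n)" by (rule LeastI_ex[OF ex])
  then obtain C :: "'a list set" where C: "C \<subseteq> words (LEAST n. ?P n)" "card C = lam"
     "\<forall>x\<in>C. \<forall>y\<in>C. x \<noteq> y \<longrightarrow> d \<le> hdist x y" by blast
  have fin: "finite C" using C(1) words_finite by (rule finite_subset)
  obtain g where g: "bij_betw g {0..<card C} C" using ex_bij_betw_nat_finite[OF fin] by blast
  have N: "N_code TYPE('a) lam d = (LEAST n. ?P n)" using False by (simp add: N_code_def)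
  show ?thesis
  proof (intro exI conjI allI impI)
    fix i assume "i < lam"
    then have "g i \<in> C" using g C(2) by (simp add: bij_betwE)
    then have "g i \<in> words (LEAST n. ?P n)" using C(1) by blast
    then show "length (g i) = N_code TYPE('a) lam d" using N by (simp add: words_def)
  next
    fix i j assume "i < lam" "j < lam" "i \<noteq> j"
    moreover have "inj_on g {0..<card C}" using g by (rule bij_betw_imp_inj_on)
    ultimately have "g i \<noteq> g j" using C(2) by (metis atLeastLessThan_iff inj_on_eq_iff zero_le)
    moreover have "g i \<in> C" "g j \<in> C" using g C(2) \<open>i < lam\<close> \<open>j < lam\<close> by (simp_all add: bij_betwE)
    ultimately show "d \<le> hdist (g i) (g j)" using C(3) by blast
  qed
qed

lemma N4:
  assumes "0 < m"
  shows "N_code TYPE('a::field) 4 (2 * m) \<le> 3 * m"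
proof -
  define w :: "nat \<Rightarrow> 'a list" where "w i = [[0,0,0],[0,1,1],[1,0,1],[1,1,0]] ! i" for i
  define c where "c i = concat (replicate m (w i))" for i
  have hw: "hdist (w i) (w j) = 2" if "i < 4" "j < 4" "i \<noteq> j" for i j
    using that by (auto simp: w_def less_Suc_eq numeral_eq_Suc)
  have lw: "length (w i) = 3" if "i < 4" for i
    using that by (auto simp: w_def less_Suc_eq numeral_eq_Suc)
  have hc: "hdist (c i) (c j) = m * 2" if "i < 4" "j < 4" "i \<noteq> j" for i j
    unfolding c_def using hdist_rep[of "w i" "w j" m] hw[OF that] lw that by simp
  have inj: "inj_on c {..<4}"
  proof (rule inj_onI)
    fix i j assume ij: "i \<in> {..<4}" "j \<in> {..<4}" "c i = c j"
    show "i = j"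
    proof (rule ccontr)
      assume "i \<noteq> j"
      then have "hdist (c i) (c j) = m * 2" using hc[of i j] ij(1,2) by simp
      then show False using ij(3) assms by simp
    qed
  qed
  have lc: "length (c i) = 3 * m" if "i < 4" for i using lw[OF that]
    by (simp add: c_def length_concat sum_list_replicate)
  have P: "\<exists>C :: 'a list set. C \<subseteq> words (3*m) \<and> card C = 4 \<and>
        (\<forall>x\<in>C. \<forall>y\<in>C. x \<noteq> y \<longrightarrow> 2*m \<le> hdist x y)"
  proof (intro exI conjI)
    show "c ` {..<4} \<subseteq> words (3 * m)" using lc by (auto simp: words_def)
    show "card (c ` {..<4}) = 4" using inj by (simp add: card_image)
    show "\<forall>x\<in>c ` {..<4}. \<forall>y\<in>c ` {..<4}. x \<noteq> y \<longrightarrow> 2*m \<le> hdist x y"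
    proof (intro ballI impI)
      fix x y assume "x \<in> c ` {..<4}" "y \<in> c ` {..<4}" "x \<noteq> y"
      then obtain i j where "i < 4" "j < 4" "x = c i" "y = c j" "i \<noteq> j" by blast
      then show "2*m \<le> hdist x y" using hc[of i j] by simp
    qed
  qed
  show ?thesis using assms unfolding N_code_def by (auto intro: Least_le[where P="\<lambda>n. \<exists>C :: 'a list set. C \<subseteq> words n \<and> card C = 4 \<and> (\<forall>x\<in>C. \<forall>y\<in>C. x \<noteq> y \<longrightarrow> 2*m \<le> hdist x y)", OF P] order.trans)
qed

lemma rank_key:
  assumes fin: "finite A" and lo: "linear_order_on A R" and a: "a \<in> A" and c: "c \<in> A"
    and ac: "(a, c) \<in> R" "a \<noteq> c"
    and I: "card {b\<in>A. (a,b)\<in>R \<and> (b,c)\<in>R} \<le> lam"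
  shows "card {b\<in>A. (b,a)\<in>R} < card {b\<in>A. (b,c)\<in>R} \<and>
         card {b\<in>A. (b,c)\<in>R} < card {b\<in>A. (b,a)\<in>R} + lam"
proof -
  let ?La = "{b\<in>A. (b,a)\<in>R}" and ?Lc = "{b\<in>A. (b,c)\<in>R}" and ?I = "{b\<in>A. (a,b)\<in>R \<and> (b,c)\<in>R}"
  have tr: "trans R" and refl: "\<forall>x\<in>A. (x,x)\<in>R" and anti: "antisym R" and tot: "total_on A R"
    using lo by (auto simp: order_on_defs refl_on_def)
  have "?La \<subset> ?Lc"
  proof
    show "?La \<subseteq> ?Lc"
    proof
      fix b assume "b \<in> ?La"
      then have "b \<in> A" "(b,a) \<in> R" by auto
      moreover have "(b,c) \<in> R" by (rule transD[OF tr \<open>(b,a) \<in> R\<close> ac(1)])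
      ultimately show "b \<in> ?Lc" by simp
    qed
    have "c \<in> ?Lc" using refl c by auto
    moreover have "c \<notin> ?La" using anti ac by (auto dest: antisymD)
    ultimately show "?La \<noteq> ?Lc" by blast
  qed
  then have 1: "card ?La < card ?Lc" using fin by (intro psubset_card_mono) auto
  have "?Lc \<subseteq> ?La \<union> (?I - {a})"
  proof
    fix x assume x: "x \<in> ?Lc"
    show "x \<in> ?La \<union> (?I - {a})"
    proof (cases "x = a")
      case True then show ?thesis using refl a by auto
    next
      case False
      then have "(x,a) \<in> R \<or> (a,x) \<in> R" using tot a x unfolding total_on_def by blast
      then show ?thesis using x False by auto
    qed
  qed
  then have "card ?Lc \<le> card (?La \<union> (?I - {a}))" using fin by (intro card_mono) auto
  also have "\<dots> \<le> card ?La + card (?I - {a})" by (rule card_Un_le)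
  also have "card (?I - {a}) = card ?I - 1" using a refl ac fin by (subst card_Diff_singleton) auto
  finally have "card ?Lc \<le> card ?La + (card ?I - 1)" .
  moreover have "card ?I \<ge> 1"
  proof -
    have "a \<in> ?I" using a refl ac by auto
    moreover have "finite ?I" using fin by simp
    ultimately have "0 < card ?I" by (auto simp only: card_gt_0_iff)
    then show ?thesis by simp
  qed
  ultimately show ?thesis using 1 I by linarith
qed

lemma mod_ne: "(a::nat) < c \<Longrightarrow> c < a + l \<Longrightarrow> a mod l \<noteq> c mod l"
proof
  assume ac: "a < c" "c < a + l" and eq: "a mod l = c mod l"
  then have "l dvd c - a" using mod_eq_dvd_iff_nat[of a c l] by simp
  then have "l \<le> c - a" using ac by (intro dvd_imp_le) auto
  then show False using ac by linarith
qed

lemma main_bound: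
  fixes f :: "'a::{finite,field} list \<Rightarrow> 'b"
    and k n td tf lam :: nat
  assumes tdf: "td \<le> tf"
    and lb: "locally_bounded k f (2 * tf) lam"
    and bi: "balls_are_intervals k f (2 * tf)"
    and sc: "exists_systematic_linear_code TYPE('a) n k (2 * td + 1)"
  shows "r_f k f td tf \<le> n - k + N_code TYPE('a) lam (2 * (tf - td))"
proof -
  let ?A = "f ` words k"
  obtain R where lo: "linear_order_on ?A R" and iv: "\<forall>u \<in> words k. \<forall>a \<in> fball k f u (2*tf).
      \<forall>c \<in> fball k f u (2*tf). \<forall>b \<in> ?A. (a, b) \<in> R \<and> (b, c) \<in> R \<longrightarrow> b \<in> fball k f u (2*tf)"
    using bi unfolding balls_are_intervals_def by blast
  obtain P :: "nat \<Rightarrow> nat \<Rightarrow> 'a" where kn: "k \<le> n" and P: "\<forall>u \<in> words k. \<forall>v \<in> words k. u \<noteq> v \<longrightarrow>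
        2 * td + 1 \<le> hdist (sys_lin_enc n k P u) (sys_lin_enc n k P v)"
    using sc unfolding exists_systematic_linear_code_def by blast
  have finA: "finite ?A" using words_finite by blast
  have finB: "finite (fball k f u \<rho>)" for u \<rho>
    by (rule finite_subset[OF _ finA]) (auto simp: fball_def)
  have selfB: "u \<in> words k \<Longrightarrow> f u \<in> fball k f u \<rho>" for u \<rho> by (auto simp: fball_def)
  have "replicate k 0 \<in> words k" by (simp add: words_def)
  then have "card (fball k f (replicate k 0) (2*tf)) \<le> lam" using lb unfolding locally_bounded_def by blast
  moreover have "0 < card (fball k f (replicate k 0) (2*tf))"
    using finB selfB[OF \<open>replicate k 0 \<in> words k\<close>] by (auto simp: card_gt_0_iff)
  ultimately have lampos: "0 < lam" by linarith
  define rk where "rk x = card {b\<in>?A. (b,x)\<in>R}" for x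
  have key: "rk (f u) mod lam \<noteq> rk (f v) mod lam"
    if u: "u \<in> words k" and v: "v \<in> words k" and fne: "f u \<noteq> f v" and h: "hdist u v \<le> 2 * tf" for u v
  proof -
    have fu: "f u \<in> fball k f u (2*tf)" using selfB u by blast
    have fv: "f v \<in> fball k f u (2*tf)" using h v by (auto simp: fball_def)
    have cardB: "card (fball k f u (2*tf)) \<le> lam" using lb u by (auto simp: locally_bounded_def)
    have tot: "total_on ?A R" using lo by (simp add: order_on_defs)
    have gen: "rk a mod lam \<noteq> rk c mod lam"
      if a: "a \<in> fball k f u (2*tf)" and c: "c \<in> fball k f u (2*tf)" and ac: "(a,c) \<in> R" "a \<noteq> c" for a c
    proof -
      have aA: "a \<in> ?A" and cA: "c \<in> ?A" using a c by (auto simp: fball_def)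
      have "{b\<in>?A. (a,b)\<in>R \<and> (b,c)\<in>R} \<subseteq> fball k f u (2*tf)" using iv u a c by blast
      then have "card {b\<in>?A. (a,b)\<in>R \<and> (b,c)\<in>R} \<le> lam"
        using cardB finB by (meson card_mono order.trans)
      from rank_key[OF finA lo aA cA ac this] show ?thesis
        unfolding rk_def by (intro mod_ne) auto
    qed
    have "f u \<in> ?A" "f v \<in> ?A" using u v by auto
    then have "(f u, f v) \<in> R \<or> (f v, f u) \<in> R" using tot fne unfolding total_on_def by blast
    then show ?thesis using gen[OF fu fv] gen[OF fv fu] fne by auto
  qed
  let ?d = "2 * (tf - td)"
  let ?N = "N_code TYPE('a) lam ?d"
  obtain cw :: "nat \<Rightarrow> 'a list" where cwl: "\<forall>i<lam. length (cw i) = ?N"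
    and cwd: "\<forall>i<lam. \<forall>j<lam. i \<noteq> j \<longrightarrow> ?d \<le> hdist (cw i) (cw j)"
    using cw_exists[of lam ?d] by blast
  define p where "p u = drop k (sys_lin_enc n k P u) @ cw (rk (f u) mod lam)" for u
  have up: "u @ p u = sys_lin_enc n k P u @ cw (rk (f u) mod lam)" if "u \<in> words k" for u
    using that by (simp add: p_def sys_lin_enc_def words_def)
  have ls: "length (sys_lin_enc n k P u) = n" if "u \<in> words k" for u
    using that kn by (simp add: sys_lin_enc_def words_def)
  have ml: "rk (f u) mod lam < lam" for u using lampos by simp
  have FCC: "is_FCC k f td tf (n - k + ?N) p"
    unfolding is_FCC_def
  proof (intro conjI ballI impI)
    fix u :: "'a list" assume "u \<in> words k"
    then show "length (p u) = n - k + ?N" using ls cwl ml by (simp add: p_def)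
  next
    fix u v :: "'a list" assume u: "u \<in> words k" and v: "v \<in> words k" and ne: "u \<noteq> v"
    have "hdist (u @ p u) (v @ p v) = hdist (sys_lin_enc n k P u) (sys_lin_enc n k P v)
        + hdist (cw (rk (f u) mod lam)) (cw (rk (f v) mod lam))"
      using up[OF u] up[OF v] ls[OF u] ls[OF v] by (simp add: hdist_append)
    then show "2 * td + 1 \<le> hdist (u @ p u) (v @ p v)" using P u v ne by fastforce
  next
    fix u v :: "'a list" assume u: "u \<in> words k" and v: "v \<in> words k" and fne: "f u \<noteq> f v"
    then have ne: "u \<noteq> v" by auto
    show "2 * tf + 1 \<le> hdist (u @ p u) (v @ p v)"
    proof (cases "hdist u v \<le> 2 * tf")
      case True
      have "hdist (u @ p u) (v @ p v) = hdist (sys_lin_enc n k P u) (sys_lin_enc n k P v)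
          + hdist (cw (rk (f u) mod lam)) (cw (rk (f v) mod lam))"
        using up[OF u] up[OF v] ls[OF u] ls[OF v] by (simp add: hdist_append)
      moreover have "2 * td + 1 \<le> hdist (sys_lin_enc n k P u) (sys_lin_enc n k P v)"
        using P u v ne by blast
      moreover have "?d \<le> hdist (cw (rk (f u) mod lam)) (cw (rk (f v) mod lam))"
        using cwd ml key[OF u v fne True] by blast
      ultimately show ?thesis using tdf by linarith
    next
      case False
      have "hdist (u @ p u) (v @ p v) = hdist u v + hdist (p u) (p v)"
        using u v by (simp add: hdist_append words_def)
      then show ?thesis using False by linarith
    qed
  qed
  show ?thesis unfolding r_f_def by (rule Least_le) (use FCC in blast)
qed

theorem theorem10:
  fixes f :: "'a::{finite,field} list \<Rightarrow> 'b"
    and k n td tf lam :: nat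
  assumes "td \<le> tf"
    and "locally_bounded k f (2 * tf) lam"
    and "balls_are_intervals k f (2 * tf)"
    and "exists_systematic_linear_code TYPE('a) n k (2 * td + 1)"
  shows "r_f k f td tf \<le> n - k + N_code TYPE('a) lam (2 * (tf - td)) \<and>
         (card (UNIV :: 'a set) = 2 \<and> lam = 4 \<longrightarrow> r_f k f td tf \<le> n - k + 3 * (tf - td))"
proof -
  have m: "r_f k f td tf \<le> n - k + N_code TYPE('a) lam (2 * (tf - td))"
    using main_bound[OF assms] .
  moreover have "r_f k f td tf \<le> n - k + 3 * (tf - td)" if "lam = 4"
  proof (cases "tf - td = 0")
    case True then show ?thesis using m by (simp add: N_code_def)
  next
    case False
    then have "N_code TYPE('a) 4 (2 * (tf - td)) \<le> 3 * (tf - td)" by (intro N4) simp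
    then show ?thesis using m that by simp
  qed
  ultimately show ?thesis by blast
qed

end
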